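(* Let $f:[0,\infty)\to\mathbb{R}$ be locally integrable with $f(u)\ge Bu^\alpha$ for all $u\ge0$, for some $B>0$ and $\alpha\in(1,\infty)$. Let $T>0$, let $v_0\ge0$ be measurable on $\mathbb{R}^n$, and let $v:[0,T]\times\mathbb{R}^n\to[0,\infty]$ be measurable, with $v(t,x)<\infty$ for a.e. $(t,x)\in[0,T]\times\mathbb{R}^n$, satisfying for a.e. $(t,x)\in[0,T]\times\mathbb{R}^n$ $$v(t,x)\ge\int_{\mathbb{R}^n}\Gamma(0,y;t,x)v_0(y)\,dy+\int_0^t\int_{\mathbb{R}^n}\Gamma(0,y;t-\tau,x)f(v(\tau,y))\,dy\,d\tau.$$ Then for a.e. $t\in[0,T]$ $$t^{\frac{1}{\alpha-1}}\Big\|\int_{\mathbb{R}^n}\Gamma(0,y;t,\cdot)v_0(y)\,dy\Big\|_{L^\infty(\mathbb{R}^n)}\le(B(\alpha-1))^{-\frac{1}{\alpha-1}}.$$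
   Context: Standing setting. Let $X=\{X_1,\dots,X_m\}$ be smooth vector fields on $\mathbb{R}^n$, linearly independent as vector fields, satisfying: (H1) there are integers $1=\sigma_1\le\dots\le\sigma_n$ such that, with dilations $\delta_\lambda(x)=(\lambda^{\sigma_1}x_1,\dots,\lambda^{\sigma_n}x_n)$, $\lambda>0$, each $X_j$ is homogeneous of degree $1$, i.e. $X_j(\phi\circ\delta_\lambda)=\lambda\,(X_j\phi)\circ\delta_\lambda$ for all $\phi\in C^\infty(\mathbb{R}^n)$, $\lambda>0$; (H2) Hörmander's rank condition at $0$: the values at $0$ of the vector fields in the Lie algebra generated by $X_1,\dots,X_m$ span $\mathbb{R}^n$. Put $\mathcal{L}:=\sum_{j=1}^mX_j^2$, $\mathcal{H}:=\partial_t-\mathcal{L}$. $\Gamma(t,x;s,y)$ denotes the global fundamental solution (heat kernel) of $\mathcal{H}$; for $t>0$, $x\mapsto\int\Gamma(0,y;t,x)\varphi(y)dy$ is the heat semigroup of $\mathcal{L}$ applied to $\varphi$. Known properties: $\Gamma\ge0$; $\Gamma(t,x;s,y)=0$ if $s\le t$; $\Gamma(0,y;t,x)=\Gamma(0,x;t,y)$; $\int_{\mathbb{R}^n}\Gamma(0,y;t,x)\,dy=1$ for $t>0$; $\Gamma(0,y;t+s,x)=\int\Gamma(0,w;t,x)\Gamma(0,y;s,w)\,dw$ for $t,s>0$. *)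

theory Defs
  imports "HOL-Analysis.Analysis" "HOL-Probability.Essential_Supremum"
begin

coinductive smooth_fun :: "('a::real_normed_vector \<Rightarrow> real) \<Rightarrow> bool" where
  "(\<forall>x. f differentiable (at x)) \<Longrightarrow> (\<forall>v. smooth_fun (\<lambda>x. frechet_derivative f (at x) v))
   \<Longrightarrow> smooth_fun f"

text \<open>A vector field on R^n is given by its coefficient map a; it acts as X phi = sum_i a_i d_i phi.\<close>
definition smooth_vf :: "(real^'n \<Rightarrow> real^'n) \<Rightarrow> bool" where
  "smooth_vf a \<longleftrightarrow> (\<forall>i. smooth_fun (\<lambda>x. a x $ i))"

definition vf_apply :: "(real^'n \<Rightarrow> real^'n) \<Rightarrow> (real^'n \<Rightarrow> real) \<Rightarrow> real^'n \<Rightarrow> real" where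
  "vf_apply a \<phi> x = frechet_derivative \<phi> (at x) (a x)"

definition dil :: "('n \<Rightarrow> nat) \<Rightarrow> real \<Rightarrow> real^'n \<Rightarrow> real^'n" where
  "dil \<sigma> r x = (\<chi> i. r ^ \<sigma> i * x $ i)"

definition hom_deg1 :: "('n \<Rightarrow> nat) \<Rightarrow> (real^'n \<Rightarrow> real^'n) \<Rightarrow> bool" where
  "hom_deg1 \<sigma> a \<longleftrightarrow> (\<forall>\<phi>. smooth_fun \<phi> \<longrightarrow> (\<forall>r>0. \<forall>x.
      vf_apply a (\<phi> \<circ> dil \<sigma> r) x = r * vf_apply a \<phi> (dil \<sigma> r x)))"

definition lie_bracket :: "(real^'n \<Rightarrow> real^'n) \<Rightarrow> (real^'n \<Rightarrow> real^'n) \<Rightarrow> real^'n \<Rightarrow> real^'n" where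
  "lie_bracket a b x = frechet_derivative b (at x) (a x) - frechet_derivative a (at x) (b x)"

inductive_set lie_words :: "(nat \<Rightarrow> real^'n \<Rightarrow> real^'n) \<Rightarrow> nat \<Rightarrow> (real^'n \<Rightarrow> real^'n) set"
  for X m where
  gen: "j < m \<Longrightarrow> X j \<in> lie_words X m"
| brk: "a \<in> lie_words X m \<Longrightarrow> b \<in> lie_words X m \<Longrightarrow> lie_bracket a b \<in> lie_words X m"

definition hormander_setting :: "(nat \<Rightarrow> real^'n \<Rightarrow> real^'n) \<Rightarrow> nat \<Rightarrow> ('n \<Rightarrow> nat) \<Rightarrow> bool" where
  "hormander_setting X m \<sigma> \<longleftrightarrow>
     (\<forall>j<m. smooth_vf (X j)) \<and>
     (\<forall>c. (\<forall>x. (\<Sum>j<m. c j *\<^sub>R X j x) = 0) \<longrightarrow> (\<forall>j<m. c j = 0)) \<and>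
     (\<forall>i. 1 \<le> \<sigma> i) \<and> (\<exists>i. \<sigma> i = 1) \<and>
     (\<forall>j<m. hom_deg1 \<sigma> (X j)) \<and>
     span {a 0 | a. a \<in> lie_words X m} = UNIV"

definition Xsp :: "(real^'n \<Rightarrow> real^'n) \<Rightarrow> (real \<times> (real^'n) \<Rightarrow> real) \<Rightarrow> real \<times> (real^'n) \<Rightarrow> real" where
  "Xsp a g z = frechet_derivative (\<lambda>y. g (fst z, y)) (at (snd z)) (a (snd z))"

definition vf_div :: "(real^'n \<Rightarrow> real^'n) \<Rightarrow> real^'n \<Rightarrow> real" where
  "vf_div a y = (\<Sum>i\<in>UNIV. frechet_derivative (\<lambda>y'. a y' $ i) (at y) (axis i 1))"

definition Xadj :: "(real^'n \<Rightarrow> real^'n) \<Rightarrow> (real \<times> (real^'n) \<Rightarrow> real) \<Rightarrow> real \<times> (real^'n) \<Rightarrow> real" where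
  "Xadj a g z = - Xsp a g z - vf_div a (snd z) * g z"

text \<open>Formal adjoint of H = d_s - sum_j X_j^2, namely H* = -d_s - sum_j (X_j* )^2.\<close>
definition Hadj :: "(nat \<Rightarrow> real^'n \<Rightarrow> real^'n) \<Rightarrow> nat \<Rightarrow> (real \<times> (real^'n) \<Rightarrow> real) \<Rightarrow> real \<times> (real^'n) \<Rightarrow> real" where
  "Hadj X m \<phi> z = - frechet_derivative (\<lambda>s. \<phi> (s, snd z)) (at (fst z)) 1
                   - (\<Sum>j<m. Xadj (X j) (Xadj (X j) \<phi>) z)"

text \<open>Gamma t x s y = Gamma(t,x;s,y): the global fundamental solution (heat kernel) of H,
  i.e. H_{(s,y)} Gamma(t,x;s,y) = delta_{(t,x)} in the sense of distributions on R^{1+n},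
  together with the known properties listed in the standing setting.\<close>
definition heat_kernel :: "(nat \<Rightarrow> real^'n \<Rightarrow> real^'n) \<Rightarrow> nat \<Rightarrow>
    (real \<Rightarrow> real^'n \<Rightarrow> real \<Rightarrow> real^'n \<Rightarrow> real) \<Rightarrow> bool" where
  "heat_kernel X m \<Gamma> \<longleftrightarrow>
     (\<lambda>(t,x,s,y). \<Gamma> t x s y) \<in> borel_measurable borel \<and>
     (\<forall>t x. \<forall>\<phi>::real \<times> (real^'n) \<Rightarrow> real. smooth_fun \<phi> \<and> bounded {z. \<phi> z \<noteq> 0} \<longrightarrow>
        integrable lborel (\<lambda>z. \<Gamma> t x (fst z) (snd z) * Hadj X m \<phi> z) \<and>
        integral\<^sup>L lborel (\<lambda>z. \<Gamma> t x (fst z) (snd z) * Hadj X m \<phi> z) = \<phi> (t, x)) \<and>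
     (\<forall>t x s y. 0 \<le> \<Gamma> t x s y) \<and>
     (\<forall>t x s y. s \<le> t \<longrightarrow> \<Gamma> t x s y = 0) \<and>
     (\<forall>t x y. \<Gamma> 0 y t x = \<Gamma> 0 x t y) \<and>
     (\<forall>t>0. \<forall>x. integrable lborel (\<lambda>y. \<Gamma> 0 y t x) \<and> integral\<^sup>L lborel (\<lambda>y. \<Gamma> 0 y t x) = 1) \<and>
     (\<forall>t>0. \<forall>s>0. \<forall>x y. integrable lborel (\<lambda>w. \<Gamma> 0 w t x * \<Gamma> 0 y s w) \<and>
        \<Gamma> 0 y (t + s) x = integral\<^sup>L lborel (\<lambda>w. \<Gamma> 0 w t x * \<Gamma> 0 y s w))"

end

theory Submission
  imports Defs
begin


lemma bern_gen:
  fixes y r :: real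
  assumes y: "y > 0" and r: "r \<le> 0 \<or> r \<ge> 1"
  shows "1 + r * (y - 1) \<le> y powr r"
  using r
proof
  assume r0: "r \<le> 0"
  have "1 + r * ln y \<le> exp (r * ln y)" by (rule exp_ge_add_one_self)
  moreover have "r * (y - 1) \<le> r * ln y"
    using ln_le_minus_one[OF y] r0 by (simp add: mult_left_mono_neg)
  ultimately have "1 + r * (y - 1) \<le> exp (r * ln y)" by linarith
  then show ?thesis using y by (simp add: powr_def)
next
  assume r1: "r \<ge> 1"
  have yr: "y powr r > 0" using y by simp
  have "(y powr r) powr (1/r) * 1 powr (1 - 1/r) \<le> (1/r) * (y powr r) + (1 - 1/r) * 1"
    using Youngs_inequality_0[of "1/r" "1 - 1/r" "y powr r" 1] r1 yr by simp
  moreover have "(y powr r) powr (1/r) = y" using y r1 by (simp add: powr_powr)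
  ultimately have "y \<le> (1/r) * (y powr r) + (1 - 1/r)" by simp
  then have "r * y \<le> r * ((1/r) * (y powr r) + (1 - 1/r))" using r1 by simp
  also have "\<dots> = y powr r + r - 1" using r1 by (simp add: algebra_simps)
  finally show ?thesis by (simp add: algebra_simps)
qed

lemma young_al:
  fixes u m \<alpha> :: real
  assumes u: "u \<ge> 0" and m: "m \<ge> 0" and a: "\<alpha> > 1"
  shows "\<alpha> * m powr (\<alpha> - 1) * u \<le> u powr \<alpha> + (\<alpha> - 1) * m powr \<alpha>"
proof (cases "m = 0 \<or> u = 0")
  case True
  then show ?thesis using a u m by auto
next
  case False
  then have m0: "m > 0" and u0: "u > 0" using u m by auto
  have "1 + \<alpha> * (u/m - 1) \<le> (u/m) powr \<alpha>" using bern_gen[of "u/m" \<alpha>] m0 u0 a by simp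
  then have "m powr \<alpha> * (1 + \<alpha> * (u/m - 1)) \<le> m powr \<alpha> * (u/m) powr \<alpha>"
    by (rule mult_left_mono) simp
  also have "m powr \<alpha> * (u/m) powr \<alpha> = u powr \<alpha>" using m0 u0 by (simp add: powr_divide)
  also have "m powr \<alpha> * (1 + \<alpha> * (u/m - 1)) = m powr \<alpha> + \<alpha> * (m powr \<alpha> / m) * u - \<alpha> * m powr \<alpha>"
    using m0 by (simp add: field_simps)
  also have "m powr \<alpha> / m = m powr (\<alpha> - 1)" using m0 by (simp add: powr_diff)
  finally show ?thesis by (simp add: algebra_simps)
qed

lemma step_ineq:
  fixes a p q B d \<alpha> :: real
  assumes a: "0 < a" "a \<le> p" "p \<le> q" and al: "\<alpha> > 1" and B: "B > 0" and d: "d \<ge> 0"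
    and st: "q - p \<ge> B * d * p powr \<alpha>"
  shows "p powr (1 - \<alpha>) - q powr (1 - \<alpha>) \<ge> (\<alpha> - 1) * B * d * (1 - \<alpha> * (q - p) / a)"
proof -
  have p0: "p > 0" and q0: "q > 0" using a by auto
  define x where "x = p / q"
  have x0: "x > 0" using p0 q0 by (simp add: x_def)
  have px: "p = x * q" using q0 by (simp add: x_def)
  have b1: "1 + (1 - \<alpha>) * (x - 1) \<le> x powr (1 - \<alpha>)"
    using bern_gen[of x "1 - \<alpha>"] x0 al by simp
  have b2: "1 + \<alpha> * (x - 1) \<le> x powr \<alpha>"
    using bern_gen[of x \<alpha>] x0 al by simp
  have e1: "p powr (1 - \<alpha>) = x powr (1 - \<alpha>) * q powr (1 - \<alpha>)"
    using x0 q0 px by (simp add: powr_mult)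
  have e2: "p powr \<alpha> = x powr \<alpha> * q powr \<alpha>"
    using x0 q0 px by (simp add: powr_mult)
  have e3: "q powr (1 - \<alpha>) * q powr \<alpha> = q"
    using q0 by (simp add: powr_add[symmetric])
  define Q where "Q = q powr (1 - \<alpha>)"
  define R where "R = q powr \<alpha>"
  have Q0: "Q > 0" "R > 0" using q0 by (auto simp: Q_def R_def)
  have QR: "Q * R = q" using e3 by (simp add: Q_def R_def)
  define X1 where "X1 = x powr (1 - \<alpha>)"
  define X2 where "X2 = x powr \<alpha>"
  have b1': "1 + (1 - \<alpha>) * (x - 1) \<le> X1" using b1 by (simp add: X1_def)
  have b2': "1 + \<alpha> * (x - 1) \<le> X2" using b2 by (simp add: X2_def)
  have st': "q - x * q \<ge> B * d * (X2 * R)" using st e2 px by (simp add: X2_def R_def)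
  have goal: "X1 * Q - Q \<ge> (\<alpha> - 1) * B * d * (1 - \<alpha> * (q - x * q) / a)"
  proof -
    have h1: "X1 * Q - Q \<ge> (\<alpha> - 1) * (1 - x) * Q"
      using mult_right_mono[OF b1', of Q] Q0 by (simp add: algebra_simps)
    have "(\<alpha> - 1) * (1 - x) * Q = (\<alpha> - 1) * ((q - x * q) / R)"
      unfolding QR[symmetric] using Q0 by (simp add: field_simps)
    also have "(q - x * q) / R \<ge> B * d * X2"
      using st' Q0 by (simp add: field_simps)
    then have "(\<alpha> - 1) * ((q - x * q) / R) \<ge> (\<alpha> - 1) * (B * d * X2)"
      using al by (intro mult_left_mono) auto
    finally have h2: "(\<alpha> - 1) * (1 - x) * Q \<ge> (\<alpha> - 1) * (B * d * X2)" .
    have "1 - \<alpha> * (q - x * q) / a \<le> 1 - \<alpha> * (1 - x)"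
    proof -
      have aq: "a \<le> q" using a by linarith
      have "x \<le> 1" using a q0 by (simp add: x_def)
      then have "(1 - x) * a \<le> (1 - x) * q" using aq
        by (intro mult_left_mono) auto
      then have "(1 - x) \<le> (q - x * q) / a" using a by (simp add: field_simps)
      then have "\<alpha> * (1 - x) \<le> \<alpha> * ((q - x * q) / a)" using al by (intro mult_left_mono) auto
      then show ?thesis by simp
    qed
    also have "\<dots> \<le> X2" using b2' by (simp add: algebra_simps)
    finally have "(\<alpha> - 1) * B * d * (1 - \<alpha> * (q - x * q) / a) \<le> (\<alpha> - 1) * B * d * X2"
      using al B d by (intro mult_left_mono) auto
    then show ?thesis using h1 h2 by (simp add: algebra_simps)
  qed
  show ?thesis using goal e1 px by (simp add: Q_def X1_def)
qed

lemma ode_discrete: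
  fixes G :: "real \<Rightarrow> real" and a B t \<alpha> :: real
  assumes al: "\<alpha> > 1" and B: "B > 0" and t: "t > 0" and a: "a > 0" and G0: "G 0 = a"
    and inc: "\<And>r s. 0 \<le> r \<Longrightarrow> r \<le> s \<Longrightarrow> s \<le> t \<Longrightarrow> G s - G r \<ge> B * (s - r) * G r powr \<alpha>"
  shows "(\<alpha> - 1) * B * t \<le> a powr (1 - \<alpha>)"
proof (rule ccontr)
  assume H: "\<not> ?thesis"
  define \<epsilon> where "\<epsilon> = (\<alpha> - 1) * B * t - a powr (1 - \<alpha>)"
  have eps: "\<epsilon> > 0" using H by (simp add: \<epsilon>_def)
  have mono: "G r \<le> G s" if "0 \<le> r" "r \<le> s" "s \<le> t" for r s
  proof -
    have "0 \<le> B * (s - r) * G r powr \<alpha>" using B that by simp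
    with inc[OF that] show ?thesis by linarith
  qed
  have Ga: "a \<le> G r" if "0 \<le> r" "r \<le> t" for r using mono[of 0 r] that G0 by simp
  define M where "M = G t"
  obtain N :: nat where N: "(\<alpha> - 1) * B * \<alpha> * t * (M - a) / a / \<epsilon> < real N"
    using reals_Archimedean2 by blast
  have Ma: "M - a \<ge> 0" using Ga[of t] t by (simp add: M_def)
  have "0 \<le> (\<alpha> - 1) * B * \<alpha> * t * (M - a) / a / \<epsilon>"
    using al B t a Ma eps by simp
  then have Npos: "real N > 0" using N by linarith
  define d where "d = t / real N"
  have d: "d > 0" using t Npos by (simp add: d_def)
  define g where "g k = G (real k * d)" for k
  have gk: "0 \<le> real k * d" "real k * d \<le> t" if "k \<le> N" for k
    using that d t Npos by (auto simp: d_def field_simps)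
  have step: "(\<alpha> - 1) * B * d * (1 - \<alpha> * (g (Suc k) - g k) / a) \<le> g k powr (1 - \<alpha>) - g (Suc k) powr (1 - \<alpha>)"
    if k: "k < N" for k
  proof (rule step_ineq)
    show "0 < a" by (rule a)
    show "a \<le> g k" unfolding g_def using gk[of k] k by (intro Ga) auto
    show "g k \<le> g (Suc k)" unfolding g_def using gk[of k] gk[of "Suc k"] k d
      by (intro mono) (auto simp: algebra_simps)
    show "\<alpha> > 1" by (rule al)
    show "B > 0" by (rule B)
    show "d \<ge> 0" using d by simp
    have "B * (real (Suc k) * d - real k * d) * G (real k * d) powr \<alpha> \<le> G (real (Suc k) * d) - G (real k * d)"
      using gk[of k] gk[of "Suc k"] k d by (intro inc) (auto simp: algebra_simps)
    then show "g (Suc k) - g k \<ge> B * d * g k powr \<alpha>" by (simp add: g_def algebra_simps)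
  qed
  have "(\<Sum>k<N. (\<alpha> - 1) * B * d * (1 - \<alpha> * (g (Suc k) - g k) / a))
      \<le> (\<Sum>k<N. g k powr (1 - \<alpha>) - g (Suc k) powr (1 - \<alpha>))"
    using step by (intro sum_mono) auto
  also have "\<dots> = g 0 powr (1 - \<alpha>) - g N powr (1 - \<alpha>)"
    by (rule sum_lessThan_telescope')
  also have "(\<Sum>k<N. (\<alpha> - 1) * B * d * (1 - \<alpha> * (g (Suc k) - g k) / a))
      = (\<alpha> - 1) * B * d * (real N - \<alpha> / a * (\<Sum>k<N. g (Suc k) - g k))"
  proof -
    define c where "c = (\<alpha> - 1) * B * d"
    have "(\<Sum>k<N. c * (1 - \<alpha> * (g (Suc k) - g k) / a)) = (\<Sum>k<N. c - (c * \<alpha> / a) * (g (Suc k) - g k))"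
      by (intro sum.cong) (auto simp: algebra_simps diff_divide_distrib)
    also have "\<dots> = c * real N - (c * \<alpha> / a) * (\<Sum>k<N. g (Suc k) - g k)"
      by (simp only: sum_subtractf sum_distrib_left[symmetric] sum_constant) simp
    also have "\<dots> = c * (real N - \<alpha> / a * (\<Sum>k<N. g (Suc k) - g k))"
      by (simp add: algebra_simps)
    finally show ?thesis by (simp add: c_def)
  qed
  also have "(\<Sum>k<N. g (Suc k) - g k) = g N - g 0" by (rule sum_lessThan_telescope)
  finally have S: "(\<alpha> - 1) * B * d * (real N - \<alpha> / a * (g N - g 0)) \<le> g 0 powr (1 - \<alpha>) - g N powr (1 - \<alpha>)" .
  have g0: "g 0 = a" using G0 by (simp add: g_def)
  have gN: "g N = M" using Npos by (simp add: g_def d_def M_def)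
  have "(\<alpha> - 1) * B * d * (real N - \<alpha> / a * (g N - g 0)) = (\<alpha> - 1) * B * t - (\<alpha> - 1) * B * \<alpha> * t * (M - a) / a / real N"
    using Npos a by (simp add: g0 gN d_def field_simps)
  moreover have "(\<alpha> - 1) * B * \<alpha> * t * (M - a) / a / real N < \<epsilon>"
  proof -
    define Y where "Y = (\<alpha> - 1) * B * \<alpha> * t * (M - a) / a"
    have "Y / \<epsilon> < real N" unfolding Y_def by (rule N)
    then have "Y < real N * \<epsilon>" using eps by (simp only: pos_divide_less_eq)
    then have "Y / real N < \<epsilon>" using Npos by (simp add: pos_divide_less_eq mult.commute)
    then show ?thesis by (simp add: Y_def)
  qed
  moreover have "g N powr (1 - \<alpha>) > 0" using gN Ga[of t] t a by (simp add: M_def)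
  ultimately have "(\<alpha> - 1) * B * t - \<epsilon> < a powr (1 - \<alpha>)" using S unfolding g0 by linarith
  then show False by (simp add: \<epsilon>_def)
qed



lemma le_one_plus_powr:
  fixes u \<alpha> :: real assumes "u \<ge> 0" "\<alpha> \<ge> 1" shows "u \<le> 1 + u powr \<alpha>"
proof (cases "u \<le> 1")
  case True then show ?thesis using assms by (smt (verit, ccfv_threshold) powr_ge_zero)
next
  case False
  then have "u powr 1 \<le> u powr \<alpha>" using assms by (intro powr_mono) auto
  then show ?thesis using False by (simp add: add_increasing)
qed

lemma jensen_nn:
  fixes K g :: "'a \<Rightarrow> real"
  assumes K[measurable]: "K \<in> borel_measurable M" and g[measurable]: "g \<in> borel_measurable M"
    and K0: "\<And>z. 0 \<le> K z" and g0: "\<And>z. 0 \<le> g z" and K1: "(\<integral>\<^sup>+z. ennreal (K z) \<partial>M) = 1"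
    and al: "\<alpha> > 1" and fin: "(\<integral>\<^sup>+z. ennreal (K z * g z powr \<alpha>) \<partial>M) < \<infinity>"
  shows "(\<integral>\<^sup>+z. ennreal (K z * g z) \<partial>M) < \<infinity> \<and>
    enn2real (\<integral>\<^sup>+z. ennreal (K z * g z) \<partial>M) powr \<alpha> \<le> enn2real (\<integral>\<^sup>+z. ennreal (K z * g z powr \<alpha>) \<partial>M)"
proof -
  define J where "J = (\<integral>\<^sup>+z. ennreal (K z * g z) \<partial>M)"
  define I where "I = (\<integral>\<^sup>+z. ennreal (K z * g z powr \<alpha>) \<partial>M)"
  have "J \<le> (\<integral>\<^sup>+z. ennreal (K z) + ennreal (K z * g z powr \<alpha>) \<partial>M)"
    unfolding J_def
  proof (intro nn_integral_mono)
    fix z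
    have "K z * g z \<le> K z * (1 + g z powr \<alpha>)"
      using le_one_plus_powr[of "g z" \<alpha>] g0 K0 al by (intro mult_left_mono) auto
    then show "ennreal (K z * g z) \<le> ennreal (K z) + ennreal (K z * g z powr \<alpha>)"
      using K0[of z] g0[of z] by (simp add: ennreal_plus[symmetric] algebra_simps del: ennreal_plus)
  qed
  also have "\<dots> = 1 + I" unfolding I_def K1[symmetric]
    by (rule nn_integral_add) auto
  finally have J1: "J \<le> 1 + I" .
  have "1 + I < \<infinity>" using fin unfolding I_def[symmetric] by (simp add: less_top)
  then have Jfin: "J < \<infinity>" using J1 by (rule order.strict_trans1[rotated])
  define m where "m = enn2real J"
  have Jm: "J = ennreal m" using Jfin by (simp add: m_def)
  have m0: "m \<ge> 0" by (simp add: m_def)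
  define i where "i = enn2real I"
  have Ii: "I = ennreal i" using fin by (simp add: i_def I_def)
  define c where "c = \<alpha> * m powr (\<alpha> - 1)"
  have c0: "c \<ge> 0" using al by (simp add: c_def)
  have "ennreal (c * m) = ennreal c * J" by (simp add: Jm ennreal_mult c0 m0)
  also have "\<dots> = (\<integral>\<^sup>+z. ennreal c * ennreal (K z * g z) \<partial>M)"
    unfolding J_def by (rule nn_integral_cmult[symmetric]) auto
  also have "\<dots> \<le> (\<integral>\<^sup>+z. ennreal (K z * g z powr \<alpha>) + ennreal ((\<alpha> - 1) * m powr \<alpha>) * ennreal (K z) \<partial>M)"
  proof (intro nn_integral_mono)
    fix z
    have "K z * (c * g z) \<le> K z * (g z powr \<alpha> + (\<alpha> - 1) * m powr \<alpha>)"
      using young_al[of "g z" m \<alpha>] g0 m0 al K0 by (intro mult_left_mono) (auto simp: c_def)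
    then show "ennreal c * ennreal (K z * g z) \<le> ennreal (K z * g z powr \<alpha>) + ennreal ((\<alpha> - 1) * m powr \<alpha>) * ennreal (K z)"
    proof -
      have r: "c * (K z * g z) \<le> K z * g z powr \<alpha> + (\<alpha> - 1) * m powr \<alpha> * K z"
        using \<open>K z * (c * g z) \<le> _\<close> by (simp add: algebra_simps)
      have p1: "0 \<le> (\<alpha> - 1) * m powr \<alpha>" using al by simp
      have p2: "0 \<le> K z * g z powr \<alpha>" using K0[of z] by simp
      have p3: "0 \<le> K z * g z" using K0[of z] g0[of z] by simp
      have "ennreal c * ennreal (K z * g z) = ennreal (c * (K z * g z))"
        using c0 p3 by (simp add: ennreal_mult)
      also have "\<dots> \<le> ennreal (K z * g z powr \<alpha> + (\<alpha> - 1) * m powr \<alpha> * K z)"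
        using r by (rule ennreal_leI)
      also have "\<dots> = ennreal (K z * g z powr \<alpha>) + ennreal ((\<alpha> - 1) * m powr \<alpha>) * ennreal (K z)"
        using p1 p2 K0[of z] by (simp add: ennreal_mult ennreal_plus)
      finally show ?thesis .
    qed
  qed
  also have "\<dots> = I + ennreal ((\<alpha> - 1) * m powr \<alpha>) * 1"
    unfolding I_def K1[symmetric] by (subst nn_integral_add) (auto simp: nn_integral_cmult)
  finally have X: "ennreal (c * m) \<le> I + ennreal ((\<alpha> - 1) * m powr \<alpha>) * 1" .
  have "ennreal (c * m) \<le> ennreal (i + (\<alpha> - 1) * m powr \<alpha>)"
  proof -
    have "0 \<le> i" by (simp add: i_def)
    moreover have "0 \<le> (\<alpha> - 1) * m powr \<alpha>" using al by simp
    ultimately show ?thesis using X by (simp add: Ii ennreal_plus)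
  qed
  then have "c * m \<le> i + (\<alpha> - 1) * m powr \<alpha>"
    using al m0 by (subst (asm) ennreal_le_iff) (auto simp: i_def)
  moreover have "c * m = \<alpha> * m powr \<alpha>"
  proof (cases "m = 0")
    case True then show ?thesis using al by (simp add: c_def)
  next
    case False then show ?thesis using m0 by (simp add: c_def powr_diff)
  qed
  ultimately have "m powr \<alpha> \<le> i" by (simp add: algebra_simps)
  then show ?thesis using Jfin by (simp add: J_def[symmetric] I_def[symmetric] m_def i_def)
qed



locale hk =
  fixes \<Gamma> :: "real \<Rightarrow> real^'n \<Rightarrow> real \<Rightarrow> real^'n \<Rightarrow> real"
  assumes Gmeas: "(\<lambda>(t,x,s,y). \<Gamma> t x s y) \<in> borel_measurable borel"
    and Gnn: "\<And>t x s y. 0 \<le> \<Gamma> t x s y"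
    and Gvan: "\<And>t x s y. s \<le> t \<Longrightarrow> \<Gamma> t x s y = 0"
    and Gsym: "\<And>t x y. \<Gamma> 0 y t x = \<Gamma> 0 x t y"
    and Gint: "\<And>t x. t > 0 \<Longrightarrow> integrable lborel (\<lambda>y. \<Gamma> 0 y t x) \<and> integral\<^sup>L lborel (\<lambda>y. \<Gamma> 0 y t x) = 1"
    and Gsg: "\<And>t s x y. t > 0 \<Longrightarrow> s > 0 \<Longrightarrow> integrable lborel (\<lambda>w. \<Gamma> 0 w t x * \<Gamma> 0 y s w) \<and>
        \<Gamma> 0 y (t + s) x = integral\<^sup>L lborel (\<lambda>w. \<Gamma> 0 w t x * \<Gamma> 0 y s w)"
begin

lemma Gam_meas[measurable (raw)]:
  assumes a: "a \<in> borel_measurable M" and b: "b \<in> borel_measurable M"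
    and c: "c \<in> borel_measurable M" and d: "d \<in> borel_measurable M"
  shows "(\<lambda>\<omega>. \<Gamma> (a \<omega>) (b \<omega>) (c \<omega>) (d \<omega>)) \<in> borel_measurable M"
proof -
  have "(\<lambda>\<omega>. (a \<omega>, b \<omega>, c \<omega>, d \<omega>)) \<in> borel_measurable M"
    using a b c d by measurable
  from measurable_compose[OF this Gmeas] show ?thesis by simp
qed

lemma K1: "t > 0 \<Longrightarrow> (\<integral>\<^sup>+y. ennreal (\<Gamma> 0 y t x) \<partial>lborel) = 1"
  using Gint[of t x] Gnn by (subst nn_integral_eq_integral) auto

lemma SG: "t > 0 \<Longrightarrow> s > 0 \<Longrightarrow> (\<integral>\<^sup>+w. ennreal (\<Gamma> 0 w t x) * ennreal (\<Gamma> 0 y s w) \<partial>lborel) = ennreal (\<Gamma> 0 y (t + s) x)"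
  using Gsg[of t s x y] Gnn by (subst ennreal_mult[symmetric]) (auto simp: nn_integral_eq_integral)

definition Rf :: "real \<Rightarrow> real \<Rightarrow> (real^'n \<Rightarrow> real) \<Rightarrow> (real \<times> (real^'n) \<Rightarrow> real) \<Rightarrow> real \<Rightarrow> real^'n \<Rightarrow> ennreal" where
  "Rf \<alpha> B w0 Vt \<tau> y = (\<integral>\<^sup>+z. ennreal (\<Gamma> 0 z \<tau> y) * ennreal (w0 z) \<partial>lborel)
     + (\<integral>\<^sup>+s. indicator {0..\<tau>} s * (\<integral>\<^sup>+z. ennreal (\<Gamma> 0 z (\<tau> - s) y) * ennreal (B * Vt (s, z) powr \<alpha>) \<partial>lborel) \<partial>lborel)"

lemma compC:
  fixes w0 :: "real^'n \<Rightarrow> real" and Vt :: "real \<times> (real^'n) \<Rightarrow> real"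
  assumes [measurable]: "w0 \<in> borel_measurable lborel" "Vt \<in> borel_measurable (lborel \<Otimes>\<^sub>M lborel)"
    and \<tau>: "0 < \<tau>" "\<tau> < t"
  shows "(\<integral>\<^sup>+y. ennreal (\<Gamma> 0 y (t - \<tau>) x) * Rf \<alpha> B w0 Vt \<tau> y \<partial>lborel)
    = (\<integral>\<^sup>+z. ennreal (\<Gamma> 0 z t x) * ennreal (w0 z) \<partial>lborel)
      + (\<integral>\<^sup>+s. indicator {0..\<tau>} s * (\<integral>\<^sup>+z. ennreal (\<Gamma> 0 z (t - s) x) * ennreal (B * Vt (s, z) powr \<alpha>) \<partial>lborel) \<partial>lborel)"
proof -
  let ?k = "\<lambda>y. ennreal (\<Gamma> 0 y (t - \<tau>) x)"
  let ?F = "\<lambda>s z. ennreal (B * Vt (s, z) powr \<alpha>)"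
  have "(\<integral>\<^sup>+y. ?k y * Rf \<alpha> B w0 Vt \<tau> y \<partial>lborel)
     = (\<integral>\<^sup>+y. ?k y * (\<integral>\<^sup>+z. ennreal (\<Gamma> 0 z \<tau> y) * ennreal (w0 z) \<partial>lborel) \<partial>lborel)
     + (\<integral>\<^sup>+y. ?k y * (\<integral>\<^sup>+s. indicator {0..\<tau>} s * (\<integral>\<^sup>+z. ennreal (\<Gamma> 0 z (\<tau> - s) y) * ?F s z \<partial>lborel) \<partial>lborel) \<partial>lborel)"
    unfolding Rf_def distrib_left by (rule nn_integral_add) measurable
  also have "(\<integral>\<^sup>+y. ?k y * (\<integral>\<^sup>+z. ennreal (\<Gamma> 0 z \<tau> y) * ennreal (w0 z) \<partial>lborel) \<partial>lborel)
      = (\<integral>\<^sup>+z. ennreal (\<Gamma> 0 z t x) * ennreal (w0 z) \<partial>lborel)"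
  proof -
    have "(\<integral>\<^sup>+y. ?k y * (\<integral>\<^sup>+z. ennreal (\<Gamma> 0 z \<tau> y) * ennreal (w0 z) \<partial>lborel) \<partial>lborel)
        = (\<integral>\<^sup>+y. (\<integral>\<^sup>+z. ?k y * ennreal (\<Gamma> 0 z \<tau> y) * ennreal (w0 z) \<partial>lborel) \<partial>lborel)"
      by (intro nn_integral_cong) (simp add: nn_integral_cmult[symmetric] mult.assoc)
    also have "\<dots> = (\<integral>\<^sup>+z. (\<integral>\<^sup>+y. ?k y * ennreal (\<Gamma> 0 z \<tau> y) * ennreal (w0 z) \<partial>lborel) \<partial>lborel)"
      by (rule lborel_pair.Fubini'[symmetric]) measurable
    also have "\<dots> = (\<integral>\<^sup>+z. (\<integral>\<^sup>+y. ?k y * ennreal (\<Gamma> 0 z \<tau> y) \<partial>lborel) * ennreal (w0 z) \<partial>lborel)"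
      by (intro nn_integral_cong) (simp add: nn_integral_multc)
    also have "\<dots> = (\<integral>\<^sup>+z. ennreal (\<Gamma> 0 z t x) * ennreal (w0 z) \<partial>lborel)"
      using SG[of "t - \<tau>" \<tau> x] \<tau> by simp
    finally show ?thesis .
  qed
  also have "(\<integral>\<^sup>+y. ?k y * (\<integral>\<^sup>+s. indicator {0..\<tau>} s * (\<integral>\<^sup>+z. ennreal (\<Gamma> 0 z (\<tau> - s) y) * ?F s z \<partial>lborel) \<partial>lborel) \<partial>lborel)
     = (\<integral>\<^sup>+s. indicator {0..\<tau>} s * (\<integral>\<^sup>+z. ennreal (\<Gamma> 0 z (t - s) x) * ?F s z \<partial>lborel) \<partial>lborel)"
  proof -
    have "(\<integral>\<^sup>+y. ?k y * (\<integral>\<^sup>+s. indicator {0..\<tau>} s * (\<integral>\<^sup>+z. ennreal (\<Gamma> 0 z (\<tau> - s) y) * ?F s z \<partial>lborel) \<partial>lborel) \<partial>lborel)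
       = (\<integral>\<^sup>+y. (\<integral>\<^sup>+s. (\<integral>\<^sup>+z. ?k y * indicator {0..\<tau>} s * ennreal (\<Gamma> 0 z (\<tau> - s) y) * ?F s z \<partial>lborel) \<partial>lborel) \<partial>lborel)"
      by (intro nn_integral_cong) (simp add: nn_integral_cmult[symmetric] mult.assoc)
    also have "\<dots> = (\<integral>\<^sup>+s. (\<integral>\<^sup>+y. (\<integral>\<^sup>+z. ?k y * indicator {0..\<tau>} s * ennreal (\<Gamma> 0 z (\<tau> - s) y) * ?F s z \<partial>lborel) \<partial>lborel) \<partial>lborel)"
      by (rule lborel_pair.Fubini'[symmetric]) measurable
    also have "\<dots> = (\<integral>\<^sup>+s. (\<integral>\<^sup>+z. (\<integral>\<^sup>+y. ?k y * indicator {0..\<tau>} s * ennreal (\<Gamma> 0 z (\<tau> - s) y) * ?F s z \<partial>lborel) \<partial>lborel) \<partial>lborel)"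
      by (intro nn_integral_cong lborel_pair.Fubini'[symmetric]) measurable
    also have "\<dots> = (\<integral>\<^sup>+s. indicator {0..\<tau>} s * (\<integral>\<^sup>+z. ennreal (\<Gamma> 0 z (t - s) x) * ?F s z \<partial>lborel) \<partial>lborel)"
    proof (intro nn_integral_cong_AE eventually_mono[OF AE_lborel_singleton[of \<tau>]])
      fix s :: real assume s\<tau>: "s \<noteq> \<tau>"
      show "(\<integral>\<^sup>+z. (\<integral>\<^sup>+y. ?k y * indicator {0..\<tau>} s * ennreal (\<Gamma> 0 z (\<tau> - s) y) * ?F s z \<partial>lborel) \<partial>lborel)
          = indicator {0..\<tau>} s * (\<integral>\<^sup>+z. ennreal (\<Gamma> 0 z (t - s) x) * ?F s z \<partial>lborel)"
      proof (cases "s \<in> {0..\<tau>}")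
        case False then show ?thesis by simp
      next
        case True
        then have s: "0 < \<tau> - s" using s\<tau> by auto
        have "(\<integral>\<^sup>+z. (\<integral>\<^sup>+y. ?k y * indicator {0..\<tau>} s * ennreal (\<Gamma> 0 z (\<tau> - s) y) * ?F s z \<partial>lborel) \<partial>lborel)
           = (\<integral>\<^sup>+z. (\<integral>\<^sup>+y. ?k y * ennreal (\<Gamma> 0 z (\<tau> - s) y) \<partial>lborel) * ?F s z \<partial>lborel)"
        proof (intro nn_integral_cong)
          fix z :: "real^'n"
          have "(\<integral>\<^sup>+y. ?k y * indicator {0..\<tau>} s * ennreal (\<Gamma> 0 z (\<tau> - s) y) * ?F s z \<partial>lborel)
             = (\<integral>\<^sup>+y. (?k y * ennreal (\<Gamma> 0 z (\<tau> - s) y)) * ?F s z \<partial>lborel)"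
            using True by (intro nn_integral_cong) simp
          also have "\<dots> = (\<integral>\<^sup>+y. ?k y * ennreal (\<Gamma> 0 z (\<tau> - s) y) \<partial>lborel) * ?F s z"
            by (rule nn_integral_multc) measurable
          finally show "(\<integral>\<^sup>+y. ?k y * indicator {0..\<tau>} s * ennreal (\<Gamma> 0 z (\<tau> - s) y) * ?F s z \<partial>lborel)
             = (\<integral>\<^sup>+y. ?k y * ennreal (\<Gamma> 0 z (\<tau> - s) y) \<partial>lborel) * ?F s z" .
        qed
        also have "\<dots> = (\<integral>\<^sup>+z. ennreal (\<Gamma> 0 z (t - s) x) * ?F s z \<partial>lborel)"
          using SG[of "t - \<tau>" "\<tau> - s" x] \<tau> s by simp
        finally show ?thesis using True by simp
      qed
    qed
    finally show ?thesis .
  qed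
  finally show ?thesis .
qed

lemma pointwise:
  fixes w0 :: "real^'n \<Rightarrow> real" and Vt :: "real \<times> (real^'n) \<Rightarrow> real" and x :: "real^'n"
    and t \<alpha> B :: real
  assumes w0m[measurable]: "w0 \<in> borel_measurable lborel"
    and Vtm[measurable]: "Vt \<in> borel_measurable (lborel \<Otimes>\<^sub>M lborel)"
    and w0nn: "\<And>y. 0 \<le> w0 y" and Vtnn: "\<And>z. 0 \<le> Vt z"
    and al: "\<alpha> > 1" and B: "B > 0" and t: "t > 0"
    and good: "AE \<tau> in lborel. 0 < \<tau> \<longrightarrow> \<tau> < t \<longrightarrow> (AE y in lborel. Rf \<alpha> B w0 Vt \<tau> y \<le> ennreal (Vt (\<tau>, y)))"
    and fin: "Rf \<alpha> B w0 Vt t x < \<infinity>"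
  shows "(\<integral>\<^sup>+z. ennreal (\<Gamma> 0 z t x) * ennreal (w0 z) \<partial>lborel) \<le> ennreal (((\<alpha> - 1) * B * t) powr (-1 / (\<alpha> - 1)))"
proof -
  define a where "a = (\<integral>\<^sup>+z. ennreal (\<Gamma> 0 z t x) * ennreal (w0 z) \<partial>lborel)"
  define W\<alpha> where "W\<alpha> s = (\<integral>\<^sup>+z. ennreal (\<Gamma> 0 z (t - s) x * Vt (s, z) powr \<alpha>) \<partial>lborel)" for s
  define W where "W s = (\<integral>\<^sup>+z. ennreal (\<Gamma> 0 z (t - s) x * Vt (s, z)) \<partial>lborel)" for s
  define Gf where "Gf \<tau> = a + ennreal B * (\<integral>\<^sup>+s. indicator {0..\<tau>} s * W\<alpha> s \<partial>lborel)" for \<tau>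
  have W\<alpha>m[measurable]: "W\<alpha> \<in> borel_measurable lborel" unfolding W\<alpha>_def by measurable
  have Fsplit: "(\<integral>\<^sup>+z. ennreal (\<Gamma> 0 z (t - s) x) * ennreal (B * Vt (s, z) powr \<alpha>) \<partial>lborel) = ennreal B * W\<alpha> s" for s
  proof -
    have "(\<integral>\<^sup>+z. ennreal (\<Gamma> 0 z (t - s) x) * ennreal (B * Vt (s, z) powr \<alpha>) \<partial>lborel)
       = (\<integral>\<^sup>+z. ennreal B * ennreal (\<Gamma> 0 z (t - s) x * Vt (s, z) powr \<alpha>) \<partial>lborel)"
    proof (intro nn_integral_cong)
      fix z
      have "ennreal (\<Gamma> 0 z (t - s) x) * ennreal (B * Vt (s, z) powr \<alpha>) = ennreal (\<Gamma> 0 z (t - s) x * (B * Vt (s, z) powr \<alpha>))"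
        using Gnn B by (simp add: ennreal_mult)
      also have "\<dots> = ennreal (B * (\<Gamma> 0 z (t - s) x * Vt (s, z) powr \<alpha>))" by (simp add: mult_ac)
      also have "\<dots> = ennreal B * ennreal (\<Gamma> 0 z (t - s) x * Vt (s, z) powr \<alpha>)"
        using Gnn B by (simp add: ennreal_mult)
      finally show "ennreal (\<Gamma> 0 z (t - s) x) * ennreal (B * Vt (s, z) powr \<alpha>) = ennreal B * ennreal (\<Gamma> 0 z (t - s) x * Vt (s, z) powr \<alpha>)" .
    qed
    also have "\<dots> = ennreal B * W\<alpha> s" unfolding W\<alpha>_def by (rule nn_integral_cmult) measurable
    finally show ?thesis .
  qed
  have Isplit: "(\<integral>\<^sup>+s. indicator {0..\<tau>} s * (ennreal B * W\<alpha> s) \<partial>lborel) = ennreal B * (\<integral>\<^sup>+s. indicator {0..\<tau>} s * W\<alpha> s \<partial>lborel)" for \<tau>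
  proof -
    have "(\<integral>\<^sup>+s. indicator {0..\<tau>} s * (ennreal B * W\<alpha> s) \<partial>lborel) = (\<integral>\<^sup>+s. ennreal B * (indicator {0..\<tau>} s * W\<alpha> s) \<partial>lborel)"
      by (simp add: mult_ac)
    also have "\<dots> = ennreal B * (\<integral>\<^sup>+s. indicator {0..\<tau>} s * W\<alpha> s \<partial>lborel)"
      by (rule nn_integral_cmult) measurable
    finally show ?thesis .
  qed
  have GfR: "(\<integral>\<^sup>+y. ennreal (\<Gamma> 0 y (t - \<tau>) x) * Rf \<alpha> B w0 Vt \<tau> y \<partial>lborel) = Gf \<tau>" if "0 < \<tau>" "\<tau> < t" for \<tau>
    using compC[OF w0m Vtm that, of x \<alpha> B] by (simp add: Fsplit Isplit Gf_def a_def)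
  have Rt: "Rf \<alpha> B w0 Vt t x = Gf t"
    unfolding Rf_def by (simp add: Fsplit Isplit Gf_def a_def)
  have Gfin: "Gf t < \<infinity>" using fin Rt by simp
  have Gmono: "Gf \<tau>1 \<le> Gf \<tau>2" if "\<tau>1 \<le> \<tau>2" for \<tau>1 \<tau>2
    unfolding Gf_def using that
    by (intro add_left_mono mult_left_mono nn_integral_mono) (auto split: split_indicator)
  have W_ge: "AE \<tau> in lborel. 0 < \<tau> \<longrightarrow> \<tau> < t \<longrightarrow> Gf \<tau> \<le> W \<tau>"
    using good
  proof eventually_elim
    case (elim \<tau>)
    show ?case
    proof (intro impI)
      assume \<tau>: "0 < \<tau>" "\<tau> < t"
      have "Gf \<tau> = (\<integral>\<^sup>+y. ennreal (\<Gamma> 0 y (t - \<tau>) x) * Rf \<alpha> B w0 Vt \<tau> y \<partial>lborel)" using GfR \<tau> by simp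
      also have "\<dots> \<le> (\<integral>\<^sup>+y. ennreal (\<Gamma> 0 y (t - \<tau>) x) * ennreal (Vt (\<tau>, y)) \<partial>lborel)"
        using elim \<tau> by (intro nn_integral_mono_AE) (auto elim!: eventually_mono intro: mult_left_mono)
      also have "\<dots> = W \<tau>" unfolding W_def using Gnn Vtnn by (intro nn_integral_cong) (simp add: ennreal_mult)
      finally show "Gf \<tau> \<le> W \<tau>" .
    qed
  qed
  have jen: "W s < \<infinity> \<and> enn2real (W s) powr \<alpha> \<le> enn2real (W\<alpha> s)" if "s < t" "W\<alpha> s < \<infinity>" for s
    unfolding W_def W\<alpha>_def
  proof (rule jensen_nn)
    show "(\<lambda>z. \<Gamma> 0 z (t - s) x) \<in> borel_measurable lborel" by measurable
    show "(\<lambda>z. Vt (s, z)) \<in> borel_measurable lborel" by measurable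
    show "(\<integral>\<^sup>+z. ennreal (\<Gamma> 0 z (t - s) x) \<partial>lborel) = 1" using K1 that by simp
  qed (use Gnn Vtnn al that in \<open>auto simp: W\<alpha>_def\<close>)
  have step: "Gf r + ennreal (B * (s - r) * enn2real (Gf r) powr \<alpha>) \<le> Gf s"
    if rs: "0 \<le> r" "r \<le> s" "s \<le> t" for r s
  proof -
    define c where "c = enn2real (Gf r) powr \<alpha>"
    have c0: "c \<ge> 0" by (simp add: c_def)
    have "(\<integral>\<^sup>+\<sigma>. indicator {0..s} \<sigma> * W\<alpha> \<sigma> \<partial>lborel)
        = (\<integral>\<^sup>+\<sigma>. indicator {0..r} \<sigma> * W\<alpha> \<sigma> + indicator {r<..s} \<sigma> * W\<alpha> \<sigma> \<partial>lborel)"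
      using rs by (intro nn_integral_cong) (auto split: split_indicator)
    also have "\<dots> = (\<integral>\<^sup>+\<sigma>. indicator {0..r} \<sigma> * W\<alpha> \<sigma> \<partial>lborel) + (\<integral>\<^sup>+\<sigma>. indicator {r<..s} \<sigma> * W\<alpha> \<sigma> \<partial>lborel)"
      by (rule nn_integral_add) measurable
    finally have split: "(\<integral>\<^sup>+\<sigma>. indicator {0..s} \<sigma> * W\<alpha> \<sigma> \<partial>lborel)
        = (\<integral>\<^sup>+\<sigma>. indicator {0..r} \<sigma> * W\<alpha> \<sigma> \<partial>lborel) + (\<integral>\<^sup>+\<sigma>. indicator {r<..s} \<sigma> * W\<alpha> \<sigma> \<partial>lborel)" .
    have "ennreal c * ennreal (s - r) = (\<integral>\<^sup>+\<sigma>. ennreal c * indicator {r<..s} \<sigma> \<partial>lborel)"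
      using rs by (simp add: nn_integral_cmult_indicator)
    also have "\<dots> \<le> (\<integral>\<^sup>+\<sigma>. indicator {r<..s} \<sigma> * W\<alpha> \<sigma> \<partial>lborel)"
      using W_ge AE_lborel_singleton[of t]
    proof (intro nn_integral_mono_AE, eventually_elim)
      case (elim \<sigma>)
      show ?case
      proof (cases "\<sigma> \<in> {r<..s}")
        case False then show ?thesis by simp
      next
        case mem: True
        then have \<sigma>: "0 < \<sigma>" "\<sigma> < t" using rs elim by auto
        show ?thesis
        proof (cases "W\<alpha> \<sigma> = \<infinity>")
          case True then show ?thesis using mem by simp
        next
          case False
          then have Wf: "W\<alpha> \<sigma> < \<infinity>" by (simp add: less_top)
          from jen[OF \<sigma>(2) Wf] have j: "W \<sigma> < \<infinity>" "enn2real (W \<sigma>) powr \<alpha> \<le> enn2real (W\<alpha> \<sigma>)" by auto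
          have "Gf r \<le> Gf \<sigma>" using mem by (intro Gmono) auto
          also have "\<dots> \<le> W \<sigma>" using elim \<sigma> by auto
          finally have "enn2real (Gf r) \<le> enn2real (W \<sigma>)" using j(1) by (intro enn2real_mono) auto
          then have "c \<le> enn2real (W \<sigma>) powr \<alpha>" unfolding c_def using al by (intro powr_mono2) auto
          also have "\<dots> \<le> enn2real (W\<alpha> \<sigma>)" by (rule j(2))
          finally have "ennreal c \<le> W\<alpha> \<sigma>" using Wf by (simp add: ennreal_le_iff2 ennreal_leI) (metis Wf ennreal_enn2real ennreal_leI less_top)
          then show ?thesis using mem by simp
        qed
      qed
    qed
    finally have I2: "ennreal c * ennreal (s - r) \<le> (\<integral>\<^sup>+\<sigma>. indicator {r<..s} \<sigma> * W\<alpha> \<sigma> \<partial>lborel)" .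
    have "Gf r + ennreal (B * (s - r) * c) = a + ennreal B * (\<integral>\<^sup>+\<sigma>. indicator {0..r} \<sigma> * W\<alpha> \<sigma> \<partial>lborel) + ennreal B * (ennreal c * ennreal (s - r))"
      using B rs c0 by (simp add: Gf_def ennreal_mult mult_ac)
    also have "\<dots> \<le> a + ennreal B * (\<integral>\<^sup>+\<sigma>. indicator {0..r} \<sigma> * W\<alpha> \<sigma> \<partial>lborel) + ennreal B * (\<integral>\<^sup>+\<sigma>. indicator {r<..s} \<sigma> * W\<alpha> \<sigma> \<partial>lborel)"
      using I2 by (intro add_left_mono mult_left_mono) auto
    also have "\<dots> = Gf s" unfolding Gf_def split by (simp add: distrib_left add.assoc)
    finally show ?thesis by (simp add: c_def)
  qed
  define G where "G \<tau> = enn2real (Gf \<tau>)" for \<tau>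
  have Gfin': "Gf \<tau> < \<infinity>" if "\<tau> \<le> t" for \<tau> using Gmono[OF that] Gfin by (rule le_less_trans)
  have ainf: "a < \<infinity>" using Gfin'[of 0] t unfolding Gf_def by (simp add: less_top)
  have G0: "G 0 = enn2real a"
  proof -
    have "(\<integral>\<^sup>+s. indicator {0..0} s * W\<alpha> s \<partial>lborel) = (\<integral>\<^sup>+s. W\<alpha> s * indicator {0} s \<partial>lborel)"
      by (simp add: mult.commute)
    also have "\<dots> = 0" by simp
    finally show ?thesis by (simp add: G_def Gf_def)
  qed
  have Ginc: "G s - G r \<ge> B * (s - r) * G r powr \<alpha>" if rs: "0 \<le> r" "r \<le> s" "s \<le> t" for r s
  proof -
    have fr: "Gf r < \<infinity>" and fs: "Gf s < \<infinity>" using Gfin' rs by auto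
    have nn: "0 \<le> B * (s - r) * enn2real (Gf r) powr \<alpha>" using B rs by simp
    have "enn2real (Gf r + ennreal (B * (s - r) * enn2real (Gf r) powr \<alpha>)) \<le> enn2real (Gf s)"
      using step[OF rs] fs by (intro enn2real_mono) auto
    moreover have "enn2real (Gf r + ennreal (B * (s - r) * enn2real (Gf r) powr \<alpha>)) = G r + B * (s - r) * G r powr \<alpha>"
      using fr nn by (simp add: G_def enn2real_plus)
    ultimately show ?thesis by (simp add: G_def)
  qed
  define ar where "ar = enn2real a"
  have a_eq: "a = ennreal ar" using ainf by (simp add: ar_def)
  show ?thesis
  proof (cases "ar = 0")
    case True then show ?thesis using a_eq by (simp add: a_def)
  next
    case False
    moreover have "ar \<ge> 0" by (simp add: ar_def)
    ultimately have ar0: "ar > 0" by simp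
    have ode: "(\<alpha> - 1) * B * t \<le> ar powr (1 - \<alpha>)"
      using ode_discrete[of \<alpha> B t ar G] al B t ar0 G0 Ginc by (simp add: ar_def)
    have pos: "0 < (\<alpha> - 1) * B * t" using al B t by simp
    have "(ar powr (1 - \<alpha>)) powr (-1 / (\<alpha> - 1)) \<le> ((\<alpha> - 1) * B * t) powr (-1 / (\<alpha> - 1))"
      using al pos ode by (intro powr_mono2') auto
    moreover have "(ar powr (1 - \<alpha>)) powr (-1 / (\<alpha> - 1)) = ar"
    proof -
      have "(1 - \<alpha>) * (-1 / (\<alpha> - 1)) = 1" using al by (simp add: field_simps)
      then show ?thesis using ar0 by (simp add: powr_powr)
    qed
    ultimately have "ar \<le> ((\<alpha> - 1) * B * t) powr (-1 / (\<alpha> - 1))" by simp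
    then show ?thesis using a_eq by (simp add: a_def ennreal_leI)
  qed
qed
end


theorem lemma3p6:
  fixes X :: "nat \<Rightarrow> real^'n \<Rightarrow> real^'n" and m :: nat and \<sigma> :: "'n \<Rightarrow> nat"
    and \<Gamma> :: "real \<Rightarrow> real^'n \<Rightarrow> real \<Rightarrow> real^'n \<Rightarrow> real"
    and f :: "real \<Rightarrow> real" and B \<alpha> T :: real
    and v0 :: "real^'n \<Rightarrow> real" and v :: "real \<Rightarrow> real^'n \<Rightarrow> ennreal"
  assumes setting: "hormander_setting X m \<sigma>"
    and kernel: "heat_kernel X m \<Gamma>"
    and f_loc: "\<forall>b\<ge>0. set_integrable lebesgue {0..b} f"
    and f_ge: "\<forall>u\<ge>0. f u \<ge> B * u powr \<alpha>"
    and B_pos: "B > 0" and alpha: "\<alpha> > 1"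
    and T_pos: "T > 0"
    and v0_nonneg: "\<forall>y. v0 y \<ge> 0"
    and v0_meas: "v0 \<in> borel_measurable lebesgue"
    and v_meas: "(\<lambda>z. v (fst z) (snd z)) \<in> borel_measurable
                    (restrict_space (lebesgue :: (real \<times> (real^'n)) measure) ({0..T} \<times> UNIV))"
    and v_fin: "AE z in (lebesgue :: (real \<times> (real^'n)) measure).
                  fst z \<in> {0..T} \<longrightarrow> v (fst z) (snd z) < \<infinity>"
    and v_super: "AE z in (lebesgue :: (real \<times> (real^'n)) measure). fst z \<in> {0..T} \<longrightarrow>
        v (fst z) (snd z) \<ge>
          (\<integral>\<^sup>+ y. ennreal (\<Gamma> 0 y (fst z) (snd z) * v0 y) \<partial>lebesgue)
        + (\<integral>\<^sup>+ \<tau> \<in> {0..fst z}.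
             (\<integral>\<^sup>+ y. ennreal (\<Gamma> 0 y (fst z - \<tau>) (snd z) * f (enn2real (v \<tau> y))) \<partial>lebesgue) \<partial>lebesgue)"
  shows "AE t in lebesgue. t \<in> {0..T} \<longrightarrow>
           ennreal (t powr (1 / (\<alpha> - 1))) *
             esssup (lebesgue :: (real^'n) measure) (\<lambda>x. \<integral>\<^sup>+ y. ennreal (\<Gamma> 0 y t x * v0 y) \<partial>lebesgue)
           \<le> ennreal ((B * (\<alpha> - 1)) powr (- 1 / (\<alpha> - 1)))"
proof -
  have hkG: "hk \<Gamma>" using kernel unfolding heat_kernel_def hk_def by blast
  interpret hk \<Gamma> by (rule hkG)
  obtain g0 where g0m[measurable]: "g0 \<in> borel_measurable (lborel :: (real^'n) measure)"
    and g0ae: "AE y in lborel. v0 y = g0 y"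
    using completion_ex_borel_measurable_real[OF v0_meas] by blast
  obtain N0 where N0: "N0 \<in> sets lborel" "emeasure lborel N0 = 0" "{y \<in> space lborel. \<not> v0 y = g0 y} \<subseteq> N0"
    using g0ae by (auto elim!: AE_E)
  define w0 where "w0 y = indicator (- N0) y * g0 y" for y
  have w0m[measurable]: "w0 \<in> borel_measurable lborel"
  proof -
    have "- N0 \<in> sets lborel" using N0(1) by (simp add: Compl_eq_Diff_UNIV sets.compl_sets)
    then show ?thesis unfolding w0_def by measurable
  qed
  have w0eq: "g0 y = v0 y" if "y \<notin> N0" for y
  proof (rule ccontr)
    assume "g0 y \<noteq> v0 y"
    then have "y \<in> {y \<in> space lborel. \<not> v0 y = g0 y}" by auto
    with N0(3) that show False by blast
  qed
  have w0nn: "0 \<le> w0 y" for y using w0eq[of y] v0_nonneg[rule_format, of y] by (auto simp: w0_def split: split_indicator)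
  have w0le: "w0 y \<le> v0 y" for y using w0eq[of y] v0_nonneg[rule_format, of y] by (auto simp: w0_def split: split_indicator)
  have w0ae: "AE y in lborel. w0 y = v0 y"
    using AE_not_in[of N0 lborel] N0(1,2) by (auto simp: null_sets_def w0_def w0eq elim!: eventually_mono)
  define V' where "V' z = (if z \<in> {0..T} \<times> UNIV then v (fst z) (snd z) else 0)" for z :: "real \<times> (real^'n)"
  have V'm: "V' \<in> borel_measurable (lebesgue :: (real \<times> (real^'n)) measure)"
  proof -
    have "{0..T} \<times> (UNIV :: (real^'n) set) \<in> sets (lborel :: (real \<times> (real^'n)) measure)"
      by (auto intro!: borel_closed closed_Times)
    then have "({0..T} \<times> (UNIV :: (real^'n) set)) \<inter> space lebesgue \<in> sets (lebesgue :: (real \<times> (real^'n)) measure)"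
      by simp
    from measurable_restrict_space_iff[OF this, of 0 borel "\<lambda>z. v (fst z) (snd z)"] v_meas
    have "(\<lambda>z. if z \<in> {0..T} \<times> UNIV then v (fst z) (snd z) else 0) \<in> borel_measurable (lebesgue :: (real \<times> (real^'n)) measure)" by simp
    moreover
    have "V' = (\<lambda>z. if z \<in> {0..T} \<times> UNIV then v (fst z) (snd z) else 0)" by (simp add: fun_eq_iff V'_def)
    ultimately show ?thesis by simp
  qed
  obtain g where gm: "g \<in> borel_measurable (lborel :: (real \<times> (real^'n)) measure)"
    and gae: "AE z in lborel. V' z = g z"
    using completion_ex_borel_measurable[OF V'm] by blast
  obtain N where N: "N \<in> sets lborel" "emeasure lborel N = 0" "{z \<in> space lborel. \<not> V' z = g z} \<subseteq> N"
    using gae by (auto elim!: AE_E)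
  define Vt where "Vt z = indicator (- N) z * enn2real (g z)" for z
  have Vtm0: "Vt \<in> borel_measurable (lborel :: (real \<times> (real^'n)) measure)"
  proof -
    have "- N \<in> sets lborel" using N(1) by (simp add: Compl_eq_Diff_UNIV sets.compl_sets)
    then show ?thesis unfolding Vt_def using gm by measurable
  qed
  have Vtm[measurable]: "Vt \<in> borel_measurable (lborel \<Otimes>\<^sub>M lborel)"
    using Vtm0 by (simp add: lborel_prod)
  have Vtnn: "0 \<le> Vt z" for z by (simp add: Vt_def)
  have Vteq: "g z = V' z" if "z \<notin> N" for z
  proof (rule ccontr)
    assume "g z \<noteq> V' z"
    then have "z \<in> {z \<in> space lborel. \<not> V' z = g z}" by auto
    with N(3) that show False by blast
  qed
  have Vtle: "Vt z \<le> enn2real (V' z)" for z using Vteq[of z] by (auto simp: Vt_def split: split_indicator)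
  have Vtae: "AE z in lborel. Vt z = enn2real (V' z)"
    using AE_not_in[of N lborel] N(1,2) by (auto simp: null_sets_def Vt_def Vteq elim!: eventually_mono)
  define RHS where "RHS t x = (\<integral>\<^sup>+ y. ennreal (\<Gamma> 0 y t x * v0 y) \<partial>lebesgue)
        + (\<integral>\<^sup>+ \<tau> \<in> {0..t}. (\<integral>\<^sup>+ y. ennreal (\<Gamma> 0 y (t - \<tau>) x * f (enn2real (v \<tau> y))) \<partial>lebesgue) \<partial>lebesgue)" for t x
  have RHS_ge: "Rf \<alpha> B w0 Vt t x \<le> RHS t x" if tT: "t \<le> T" for t x
    unfolding Rf_def RHS_def nn_integral_completion
  proof (intro add_mono nn_integral_mono)
    fix z :: "real^'n"
    have "ennreal (\<Gamma> 0 z t x) * ennreal (w0 z) = ennreal (\<Gamma> 0 z t x * w0 z)"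
      using Gnn w0nn by (simp add: ennreal_mult)
    also have "\<dots> \<le> ennreal (\<Gamma> 0 z t x * v0 z)"
      using Gnn w0le by (intro ennreal_leI mult_left_mono) auto
    finally show "ennreal (\<Gamma> 0 z t x) * ennreal (w0 z) \<le> ennreal (\<Gamma> 0 z t x * v0 z)" .
  next
    fix s :: real
    show "indicator {0..t} s * (\<integral>\<^sup>+z. ennreal (\<Gamma> 0 z (t - s) x) * ennreal (B * Vt (s, z) powr \<alpha>) \<partial>lborel)
        \<le> (\<integral>\<^sup>+ y. ennreal (\<Gamma> 0 y (t - s) x * f (enn2real (v s y))) \<partial>lborel) * indicator {0..t} s"
    proof (cases "s \<in> {0..t}")
      case False then show ?thesis by simp
    next
      case True
      have "(\<integral>\<^sup>+z. ennreal (\<Gamma> 0 z (t - s) x) * ennreal (B * Vt (s, z) powr \<alpha>) \<partial>lborel)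
          \<le> (\<integral>\<^sup>+ y. ennreal (\<Gamma> 0 y (t - s) x * f (enn2real (v s y))) \<partial>lborel)"
      proof (intro nn_integral_mono)
        fix z :: "real^'n"
        have "Vt (s, z) \<le> enn2real (v s z)" using Vtle[of "(s, z)"] True tT by (simp add: V'_def)
        then have "B * Vt (s, z) powr \<alpha> \<le> B * enn2real (v s z) powr \<alpha>"
          using B_pos alpha Vtnn by (intro mult_left_mono powr_mono2) auto
        also have "\<dots> \<le> f (enn2real (v s z))" using f_ge by simp
        finally have fz: "B * Vt (s, z) powr \<alpha> \<le> f (enn2real (v s z))" .
        have "ennreal (\<Gamma> 0 z (t - s) x) * ennreal (B * Vt (s, z) powr \<alpha>) = ennreal (\<Gamma> 0 z (t - s) x * (B * Vt (s, z) powr \<alpha>))"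
          using Gnn B_pos by (simp add: ennreal_mult)
        also have "\<dots> \<le> ennreal (\<Gamma> 0 z (t - s) x * f (enn2real (v s z)))"
          using Gnn fz by (intro ennreal_leI mult_left_mono) auto
        finally show "ennreal (\<Gamma> 0 z (t - s) x) * ennreal (B * Vt (s, z) powr \<alpha>) \<le> ennreal (\<Gamma> 0 z (t - s) x * f (enn2real (v s z)))" .
      qed
      then show ?thesis using True by simp
    qed
  qed
  have P_ae: "AE z in (lborel :: (real \<times> (real^'n)) measure). fst z \<in> {0..T} \<longrightarrow>
      (v (fst z) (snd z) < \<infinity> \<and> RHS (fst z) (snd z) \<le> v (fst z) (snd z) \<and> Vt z = enn2real (V' z))"
    using v_fin[unfolded AE_completion_iff] v_super[unfolded AE_completion_iff] Vtae
    by eventually_elim (auto simp: RHS_def)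
  have P2: "AE t in lborel. AE x in lborel. t \<in> {0..T} \<longrightarrow>
      (v t x < \<infinity> \<and> RHS t x \<le> v t x \<and> Vt (t, x) = enn2real (V' (t, x)))"
  proof -
    have "AE z in (lborel \<Otimes>\<^sub>M lborel :: (real \<times> (real^'n)) measure). fst z \<in> {0..T} \<longrightarrow>
      (v (fst z) (snd z) < \<infinity> \<and> RHS (fst z) (snd z) \<le> v (fst z) (snd z) \<and> Vt z = enn2real (V' z))"
      using P_ae by (simp only: lborel_prod)
    from lborel_pair.AE_pair[OF this] show ?thesis by simp
  qed
  have Q: "Rf \<alpha> B w0 Vt t x \<le> ennreal (Vt (t, x)) \<and> Rf \<alpha> B w0 Vt t x < \<infinity>"
    if "t \<in> {0..T}" "v t x < \<infinity>" "RHS t x \<le> v t x" "Vt (t, x) = enn2real (V' (t, x))" for t x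
  proof -
    have "Rf \<alpha> B w0 Vt t x \<le> v t x" using RHS_ge[of t x] that by auto
    moreover have "v t x = ennreal (Vt (t, x))" using that by (simp add: V'_def)
    ultimately show ?thesis using that(2) by (auto simp: le_less_trans)
  qed
  have good: "AE \<tau> in lborel. 0 < \<tau> \<longrightarrow> \<tau> < t0 \<longrightarrow> (AE y in lborel. Rf \<alpha> B w0 Vt \<tau> y \<le> ennreal (Vt (\<tau>, y)))"
    if "t0 \<le> T" for t0
    using P2
  proof eventually_elim
    case (elim \<tau>)
    show ?case
    proof (intro impI)
      assume "0 < \<tau>" "\<tau> < t0"
      then have \<tau>T: "\<tau> \<in> {0..T}" using that by auto
      from elim show "AE y in lborel. Rf \<alpha> B w0 Vt \<tau> y \<le> ennreal (Vt (\<tau>, y))"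
      proof eventually_elim
        case (elim y)
        then show ?case using Q[of \<tau> y] \<tau>T by blast
      qed
    qed
  qed
  show ?thesis
    unfolding AE_completion_iff
    using P2
  proof eventually_elim
    case (elim t)
    show ?case
    proof (intro impI)
      assume tT: "t \<in> {0..T}"
      show "ennreal (t powr (1 / (\<alpha> - 1))) *
             esssup (lebesgue :: (real^'n) measure) (\<lambda>x. \<integral>\<^sup>+ y. ennreal (\<Gamma> 0 y t x * v0 y) \<partial>lebesgue)
           \<le> ennreal ((B * (\<alpha> - 1)) powr (- 1 / (\<alpha> - 1)))"
      proof (cases "t = 0")
        case True then show ?thesis by simp
      next
        case False
        then have t0: "t > 0" using tT by simp
        define bd where "bd = ((\<alpha> - 1) * B * t) powr (-1 / (\<alpha> - 1))"
        have phi: "(\<lambda>x. \<integral>\<^sup>+ y. ennreal (\<Gamma> 0 y t x * v0 y) \<partial>lebesgue)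
            = (\<lambda>x. \<integral>\<^sup>+ y. ennreal (\<Gamma> 0 y t x) * ennreal (w0 y) \<partial>lborel)"
        proof (rule ext)
          fix x :: "real^'n"
          show "(\<integral>\<^sup>+ y. ennreal (\<Gamma> 0 y t x * v0 y) \<partial>lebesgue) = (\<integral>\<^sup>+ y. ennreal (\<Gamma> 0 y t x) * ennreal (w0 y) \<partial>lborel)"
            unfolding nn_integral_completion using w0ae
            by (intro nn_integral_cong_AE) (auto elim!: eventually_mono simp: ennreal_mult Gnn v0_nonneg)
        qed
        have phim: "(\<lambda>x. \<integral>\<^sup>+ y. ennreal (\<Gamma> 0 y t x) * ennreal (w0 y) \<partial>lborel) \<in> borel_measurable (lebesgue :: (real^'n) measure)"
          by (intro measurable_completion) measurable
        have "AE x in lborel. (\<integral>\<^sup>+ y. ennreal (\<Gamma> 0 y t x) * ennreal (w0 y) \<partial>lborel) \<le> ennreal bd"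
          using elim
        proof eventually_elim
          case (elim x)
          then have q: "Rf \<alpha> B w0 Vt t x < \<infinity>" using Q[of t x] tT by blast
          have "(\<integral>\<^sup>+z. ennreal (\<Gamma> 0 z t x) * ennreal (w0 z) \<partial>lborel) \<le> ennreal bd"
            unfolding bd_def
            by (rule pointwise[OF w0m Vtm w0nn Vtnn alpha B_pos t0 good q]) (use tT in simp)
          then show ?case .
        qed
        then have "AE x in (lebesgue :: (real^'n) measure). (\<integral>\<^sup>+ y. ennreal (\<Gamma> 0 y t x) * ennreal (w0 y) \<partial>lborel) \<le> ennreal bd"
          by (rule AE_completion)
        with phim have es: "esssup (lebesgue :: (real^'n) measure) (\<lambda>x. \<integral>\<^sup>+ y. ennreal (\<Gamma> 0 y t x) * ennreal (w0 y) \<partial>lborel) \<le> ennreal bd"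
          by (rule esssup_I)
        have "ennreal (t powr (1 / (\<alpha> - 1))) *
             esssup (lebesgue :: (real^'n) measure) (\<lambda>x. \<integral>\<^sup>+ y. ennreal (\<Gamma> 0 y t x * v0 y) \<partial>lebesgue)
             \<le> ennreal (t powr (1 / (\<alpha> - 1))) * ennreal bd"
          unfolding phi using es by (rule mult_left_mono) simp
        also have "\<dots> = ennreal (t powr (1 / (\<alpha> - 1)) * bd)" by (simp add: ennreal_mult bd_def)
        also have "t powr (1 / (\<alpha> - 1)) * bd = (B * (\<alpha> - 1)) powr (- 1 / (\<alpha> - 1))"
        proof -
          have "bd = ((\<alpha> - 1) * B) powr (-1 / (\<alpha> - 1)) * t powr (-1 / (\<alpha> - 1))"
            unfolding bd_def using alpha B_pos t0 by (simp add: powr_mult)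
          moreover have "t powr (1 / (\<alpha> - 1)) * t powr (-1 / (\<alpha> - 1)) = 1"
            using t0 by (simp add: powr_add[symmetric])
          ultimately show ?thesis by (simp add: mult_ac)
        qed
        finally show ?thesis .
      qed
    qed
  qed
qed

end
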